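(* Let $a_1,\dots,a_n\in S^d$. Algorithm 2.6 (described in the context) terminates after finitely many steps, for feasible as well as infeasible instances. It terminates either in step 2 with a point $x^k/\|x^k\|\in S^d$ satisfying $a_i^Tx^k\ge0$ for all $i$, or in step 3 with a positively spanning subset of $\{a_1,\dots,a_n\}$. In this sense it solves the spherical feasibility problem: find $x\in S^d$ with $a_i^Tx\ge0$ for all $i$, or show none exists.
   Context: $S^d$ is the unit sphere in $\mathbb{R}^{d+1}$ and $O$ is the origin. For $x\in S^d$, an index $m$ is a most violated constraint if $a_m^Tx=\min_j a_j^Tx$. A finite set $Q$ is positively spanning if it is affinely independent and $O\in\mathrm{conv}\,Q$. The touching sphere of an affinely independent $Q$ is the unique sphere $\{z:\|z-C\|=R\}$ with $C\in\mathrm{aff}\,Q$ containing $Q$. Algorithm 2.6: (1) Choose any $j$ and set $k=1$, $x^1=a_j$, $Q_1=\{a_j\}$. (2) If $x^k/\|x^k\|$ is feasible, stop. Otherwise let $m$ be the index of a most violated constraint for $x^k/\|x^k\|$, and set $y=x^k$. (3) If $Q_k\cup\{a_m\}$ is positively spanning, stop. (4) Compute the center $C$ of the touching sphere of $Q_k\cup\{a_m\}$. (5) If $C\in\mathrm{conv}(Q_k\cup\{a_m\})$, set $x^{k+1}=C$, $Q_{k+1}=Q_k\cup\{a_m\}$ and $k:=k+1$, then go to (2). (6) Otherwise, let $y$ be the point where the segment $\overline{yC}$ meets the relative boundary of $\mathrm{conv}(Q_k\cup\{a_m\})$. Let $F$ be a facet of $\mathrm{conv}(Q_k\cup\{a_m\})$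 containing $y$, and let $a_j$ be the vertex of $Q_k$ not contained in $F$. Set $Q_k:=Q_k\setminus\{a_j\}$ and go to (4). *)

theory Defs
  imports "HOL-Analysis.Analysis"
begin

text \<open>Constraint vectors are a 0, ..., a (n-1) (the paper's a_1, ..., a_n), points of S^d
  inside a Euclidean space of type 'a (= R^(d+1)).\<close>

definition feasible :: "(nat \<Rightarrow> 'a::euclidean_space) \<Rightarrow> nat \<Rightarrow> 'a \<Rightarrow> bool" where
  "feasible a n x \<longleftrightarrow> (\<forall>i<n. a i \<bullet> x \<ge> 0)"

definition most_violated :: "(nat \<Rightarrow> 'a::euclidean_space) \<Rightarrow> nat \<Rightarrow> 'a \<Rightarrow> nat \<Rightarrow> bool" where
  "most_violated a n x m \<longleftrightarrow> m < n \<and> (\<forall>j<n. a m \<bullet> x \<le> a j \<bullet> x)"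

definition positively_spanning :: "'a::euclidean_space set \<Rightarrow> bool" where
  "positively_spanning Q \<longleftrightarrow> finite Q \<and> \<not> affine_dependent Q \<and> 0 \<in> convex hull Q"

definition touching_center :: "'a::euclidean_space set \<Rightarrow> 'a" where
  "touching_center Q = (THE C. C \<in> affine hull Q \<and> (\<exists>R. \<forall>q\<in>Q. dist q C = R))"

text \<open>States of Algorithm 2.6:
  Main x Q        -- at step (2) with current point x^k and set Q_k;
  Inner Q am y    -- at step (4) with current (possibly reduced) Q_k, the added vector a_m, and y;
  StopFeasible p  -- stopped in step (2) returning p = x^k/||x^k||;
  StopSpanning P  -- stopped in step (3) returning P = Q_k \<union> {a_m}.\<close>
datatype 'v alg_state =
    Main 'v "'v set"
  | Inner "'v set" 'v 'v
  | StopFeasible 'v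
  | StopSpanning "'v set"

inductive alg_step :: "(nat \<Rightarrow> 'a::euclidean_space) \<Rightarrow> nat \<Rightarrow> 'a alg_state \<Rightarrow> 'a alg_state \<Rightarrow> bool"
  for a :: "nat \<Rightarrow> 'a" and n :: nat where
  stop_feasible:
    "feasible a n (x /\<^sub>R norm x) \<Longrightarrow>
     alg_step a n (Main x Q) (StopFeasible (x /\<^sub>R norm x))"
| stop_spanning:
    "\<not> feasible a n (x /\<^sub>R norm x) \<Longrightarrow> most_violated a n (x /\<^sub>R norm x) m \<Longrightarrow>
     positively_spanning (insert (a m) Q) \<Longrightarrow>
     alg_step a n (Main x Q) (StopSpanning (insert (a m) Q))"
| to_inner:
    "\<not> feasible a n (x /\<^sub>R norm x) \<Longrightarrow> most_violated a n (x /\<^sub>R norm x) m \<Longrightarrow>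
     \<not> positively_spanning (insert (a m) Q) \<Longrightarrow>
     alg_step a n (Main x Q) (Inner Q (a m) x)"
| accept:
    "\<not> affine_dependent (insert am Q) \<Longrightarrow> C = touching_center (insert am Q) \<Longrightarrow>
     C \<in> convex hull (insert am Q) \<Longrightarrow>
     alg_step a n (Inner Q am y) (Main C (insert am Q))"
| drop:
    "\<not> affine_dependent (insert am Q) \<Longrightarrow> C = touching_center (insert am Q) \<Longrightarrow>
     C \<notin> convex hull (insert am Q) \<Longrightarrow>
     y' \<in> closed_segment y C \<Longrightarrow> y' \<in> rel_frontier (convex hull (insert am Q)) \<Longrightarrow>
     open_segment y' C \<inter> convex hull (insert am Q) = {} \<Longrightarrow>
     F facet_of convex hull (insert am Q) \<Longrightarrow> y' \<in> F \<Longrightarrow>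
     aj \<in> Q \<Longrightarrow> aj \<notin> F \<Longrightarrow>
     alg_step a n (Inner Q am y) (Inner (Q - {aj}) am y')"

definition alg_init :: "(nat \<Rightarrow> 'a) \<Rightarrow> nat \<Rightarrow> 'a alg_state \<Rightarrow> bool" where
  "alg_init a n s \<longleftrightarrow> (\<exists>j<n. s = Main (a j) {a j})"

end

theory Submission
  imports Defs
begin

definition ctr :: "'a::euclidean_space set \<Rightarrow> 'a \<Rightarrow> bool" where
  "ctr Q x \<longleftrightarrow> x \<in> affine hull Q \<and> (\<forall>q\<in>Q. q \<bullet> x = x \<bullet> x)"

lemma aff_dot:
  fixes x :: "'a::euclidean_space"
  assumes "\<forall>q\<in>Q. q \<bullet> x = c" "z \<in> affine hull Q"
  shows "z \<bullet> x = c"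
proof -
  have aff: "affine {z. x \<bullet> z = c}" by (rule affine_hyperplane)
  have sub: "Q \<subseteq> {z. x \<bullet> z = c}" using assms(1) by (auto simp: inner_commute)
  have "affine hull Q \<subseteq> {z. x \<bullet> z = c}" using hull_minimal[of Q _ affine, OF sub aff] .
  then show ?thesis using assms(2) by (auto simp: inner_commute)
qed

lemma ctr_aff: "ctr Q x \<Longrightarrow> z \<in> affine hull Q \<Longrightarrow> z \<bullet> x = x \<bullet> x"
  unfolding ctr_def using aff_dot by blast

lemma ctr_pyth:
  assumes "ctr Q x" "z \<in> affine hull Q"
  shows "(norm z)^2 = (norm x)^2 + (norm (z - x))^2"
proof -
  have "z \<bullet> x = x \<bullet> x" using ctr_aff assms by blast
  then show ?thesis
    by (simp add: power2_norm_eq_inner inner_diff_left inner_diff_right inner_commute)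
qed

lemma ctr_le:
  assumes "ctr Q x" "z \<in> affine hull Q"
  shows "norm x \<le> norm z"
proof -
  have "(norm x)^2 \<le> (norm z)^2" using ctr_pyth[OF assms] by simp
  then show ?thesis using power2_le_imp_le norm_ge_zero by blast
qed

lemma ctr_lt:
  assumes "ctr Q x" "z \<in> affine hull Q" "z \<noteq> x"
  shows "norm x < norm z"
proof -
  have "(norm x)^2 < (norm z)^2" using ctr_pyth[OF assms(1,2)] assms(3) by simp
  then show ?thesis using power2_less_imp_less norm_ge_zero by blast
qed

lemma ctr_unique:
  assumes "ctr Q x" "ctr Q y"
  shows "x = y"
proof -
  have "y \<bullet> x = x \<bullet> x" using ctr_aff[OF assms(1)] assms(2) by (auto simp: ctr_def)
  moreover have "x \<bullet> y = y \<bullet> y" using ctr_aff[OF assms(2)] assms(1) by (auto simp: ctr_def)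
  ultimately have "(x - y) \<bullet> (x - y) = 0"
    by (simp add: inner_diff_left inner_diff_right inner_commute)
  then show ?thesis by (metis eq_iff_diff_eq_0 inner_eq_zero_iff)
qed

lemma ctr_exists:
  fixes Q :: "'a::euclidean_space set"
  assumes "Q \<noteq> {}"
  shows "\<exists>x. ctr Q x"
proof -
  let ?S = "affine hull Q"
  let ?c = "closest_point ?S 0"
  have cl: "closed ?S" by (simp add: closed_affine_hull)
  have ne: "?S \<noteq> {}" using assms by simp
  have cS: "?c \<in> ?S" using closest_point_in_set[OF cl ne] .
  have cv: "convex ?S" by (simp add: affine_imp_convex)
  have orth: "?c \<bullet> z = ?c \<bullet> ?c" if "z \<in> ?S" for z
  proof -
    have 1: "(0 - ?c) \<bullet> (z - ?c) \<le> 0" using closest_point_dot[OF cv cl that] .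
    have "2 *\<^sub>R ?c + (-1) *\<^sub>R z \<in> ?S"
      by (rule mem_affine[OF affine_affine_hull cS that]) simp
    then have 2: "(0 - ?c) \<bullet> ((2 *\<^sub>R ?c + (-1) *\<^sub>R z) - ?c) \<le> 0" using closest_point_dot[OF cv cl] by blast
    have e: "(2 *\<^sub>R ?c + (-1) *\<^sub>R z) - ?c = ?c - z" by (simp add: scaleR_2)
    have o1: "?c \<bullet> ?c \<le> ?c \<bullet> z" using 1 by (simp add: inner_diff_right)
    have o2: "?c \<bullet> z \<le> ?c \<bullet> ?c" using 2 unfolding e by (simp add: inner_diff_right)
    from o1 o2 show ?thesis by linarith
  qed
  have "ctr Q ?c" unfolding ctr_def
  proof (intro conjI ballI)
    show "?c \<in> ?S" by (rule cS)
    fix q assume "q \<in> Q"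
    then have "q \<in> ?S" using hull_subset[of Q affine] by blast
    then show "q \<bullet> ?c = ?c \<bullet> ?c" using orth by (metis inner_commute)
  qed
  then show ?thesis by blast
qed

lemma tc:
  fixes Q :: "'a::euclidean_space set"
  assumes "Q \<noteq> {}" "\<forall>q\<in>Q. norm q = 1"
  shows "ctr Q (touching_center Q)"
proof -
  obtain x where x: "ctr Q x" using ctr_exists[OF assms(1)] by blast
  obtain q0 where q0: "q0 \<in> Q" using assms(1) by blast
  have d2: "(dist q C)^2 = 1 - 2 * (q \<bullet> C) + C \<bullet> C" if "q \<in> Q" for q C
  proof -
    have "q \<bullet> q = 1" using assms(2) that by (metis norm_eq_1)
    then show ?thesis by (simp add: dist_norm power2_norm_eq_inner inner_diff_left inner_diff_right inner_commute)
  qed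
  have "touching_center Q = x"
    unfolding touching_center_def
  proof (rule the_equality)
    show "x \<in> affine hull Q \<and> (\<exists>R. \<forall>q\<in>Q. dist q x = R)"
    proof (intro conjI exI ballI)
      show "x \<in> affine hull Q" using x by (simp add: ctr_def)
      fix q assume q: "q \<in> Q"
      have "(dist q x)^2 = (dist q0 x)^2" using d2[OF q] d2[OF q0] x q q0 by (simp add: ctr_def)
      then show "dist q x = dist q0 x" by (simp add: power2_eq_iff_nonneg)
    qed
  next
    fix C assume C: "C \<in> affine hull Q \<and> (\<exists>R. \<forall>q\<in>Q. dist q C = R)"
    then obtain R where R: "\<forall>q\<in>Q. dist q C = R" by blast
    have qc: "\<forall>q\<in>Q. q \<bullet> C = (1 + C \<bullet> C - R^2) / 2"
      using d2 R by fastforce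
    have "C \<bullet> C = (1 + C \<bullet> C - R^2) / 2" using aff_dot[OF qc] C by blast
    with qc have "ctr Q C" using C by (simp add: ctr_def)
    then show "C = x" using ctr_unique x by blast
  qed
  then show ?thesis using x by simp
qed


definition MInv :: "(nat \<Rightarrow> 'a::euclidean_space) \<Rightarrow> nat \<Rightarrow> 'a \<Rightarrow> 'a set \<Rightarrow> bool" where
  "MInv a n x Q \<longleftrightarrow> finite Q \<and> Q \<noteq> {} \<and> Q \<subseteq> a ` {..<n} \<and> \<not> affine_dependent Q \<and> ctr Q x
     \<and> x \<in> convex hull Q \<and> x \<noteq> 0"

definition Inv :: "(nat \<Rightarrow> 'a::euclidean_space) \<Rightarrow> nat \<Rightarrow> 'a \<Rightarrow> 'a alg_state \<Rightarrow> bool" where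
  "Inv a n x0 s = (case s of
     Main x Q \<Rightarrow> x = x0 \<and> MInv a n x Q
   | Inner Q am y \<Rightarrow> (\<exists>Q0. MInv a n x0 Q0 \<and> Q \<subseteq> Q0 \<and> am \<in> a ` {..<n} \<and> am \<bullet> x0 < 0 \<and> am \<notin> Q0
        \<and> \<not> affine_dependent (insert am Q0) \<and> 0 \<notin> convex hull (insert am Q0)
        \<and> y \<in> convex hull (insert am Q) \<and> (y = x0 \<or> norm y < norm x0))
   | StopFeasible p \<Rightarrow> norm p = 1 \<and> (\<forall>i<n. a i \<bullet> p \<ge> 0)
   | StopSpanning P \<Rightarrow> P \<subseteq> a ` {..<n} \<and> positively_spanning P)"

definition XX :: "(nat \<Rightarrow> 'a::euclidean_space) \<Rightarrow> nat \<Rightarrow> 'a set" where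
  "XX a n = touching_center ` Pow (a ` {..<n})"

definition lvl :: "(nat \<Rightarrow> 'a::euclidean_space) \<Rightarrow> nat \<Rightarrow> 'a \<Rightarrow> nat" where
  "lvl a n x = card {v \<in> XX a n. norm v < norm x}"

definition mu :: "(nat \<Rightarrow> 'a::euclidean_space) \<Rightarrow> nat \<Rightarrow> 'a \<Rightarrow> 'a alg_state \<Rightarrow> nat" where
  "mu a n x0 s = (case s of
     Main x Q \<Rightarrow> (n + 2) * lvl a n x + (n + 1)
   | Inner Q am y \<Rightarrow> (n + 2) * lvl a n x0 + card Q
   | _ \<Rightarrow> 0)"

lemma finite_XX: "finite (XX a n)"
  unfolding XX_def by simp

lemma lvl_less:
  assumes "x \<in> XX a n" "norm x < norm x0"
  shows "lvl a n x < lvl a n x0"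
  unfolding lvl_def
proof (rule psubset_card_mono)
  show "finite {v \<in> XX a n. norm v < norm x0}" using finite_XX[of a n] by simp
  show "{v \<in> XX a n. norm v < norm x} \<subset> {v \<in> XX a n. norm v < norm x0}"
    using assms by auto
qed

lemma unitA: "\<forall>i<n. norm (a i) = 1 \<Longrightarrow> q \<in> a ` {..<n} \<Longrightarrow> norm q = 1"
  by auto

lemma MInv_tc:
  assumes unit: "\<forall>i<n. norm (a i) = 1" and M: "MInv a n x Q"
  shows "touching_center Q = x" "x \<in> XX a n"
proof -
  have "ctr Q (touching_center Q)"
    using M unitA[OF unit] by (intro tc) (auto simp: MInv_def)
  then show e: "touching_center Q = x" using M ctr_unique by (auto simp: MInv_def)
  show "x \<in> XX a n" unfolding XX_def using M e[symmetric] by (auto simp: MInv_def)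
qed

lemma card_le_n: "Q \<subseteq> a ` {..<n} \<Longrightarrow> card Q \<le> n"
  by (metis card_image_le card_lessThan card_mono finite_imageI finite_lessThan order_trans)

lemma norm_comb_lt:
  fixes y C :: "'a::euclidean_space"
  assumes "norm C < norm y" "0 < u" "u \<le> 1"
  shows "norm ((1 - u) *\<^sub>R y + u *\<^sub>R C) < norm y"
proof -
  have "norm ((1 - u) *\<^sub>R y + u *\<^sub>R C) \<le> norm ((1 - u) *\<^sub>R y) + norm (u *\<^sub>R C)"
    by (rule norm_triangle_ineq)
  also have "\<dots> = (1 - u) * norm y + u * norm C" using assms by simp
  also have "\<dots> < (1 - u) * norm y + u * norm y" using assms by simp
  finally show ?thesis by (simp add: algebra_simps)
qed

lemma step_inv:
  assumes unit: "\<forall>i<n. norm (a i) = 1"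
    and I: "Inv a n x0 s" and st: "alg_step a n s t"
  shows "\<exists>x1. Inv a n x1 t \<and> mu a n x1 t < mu a n x0 s"
  using st
proof cases
  case (stop_feasible x Q)
  then have M: "MInv a n x Q" using I by (auto simp: Inv_def)
  then have "x \<noteq> 0" by (simp add: MInv_def)
  then have "Inv a n x0 t" using stop_feasible by (simp add: Inv_def feasible_def)
  moreover have "mu a n x0 t < mu a n x0 s" using stop_feasible by (simp add: mu_def)
  ultimately show ?thesis by blast
next
  case (stop_spanning x m Q)
  then have M: "MInv a n x Q" using I by (auto simp: Inv_def)
  have "m < n" using stop_spanning by (simp add: most_violated_def)
  then have "Inv a n x0 t" using stop_spanning M by (auto simp: Inv_def MInv_def)
  moreover have "mu a n x0 t < mu a n x0 s" using stop_spanning by (simp add: mu_def)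
  ultimately show ?thesis by blast
next
  case (to_inner x m Q)
  then have M: "MInv a n x Q" and xx: "x = x0" using I by (auto simp: Inv_def)
  have x0: "x \<noteq> 0" and fQ: "finite Q" and iQ: "\<not> affine_dependent Q" and cQ: "ctr Q x"
    and xc: "x \<in> convex hull Q" and QA: "Q \<subseteq> a ` {..<n}" using M by (auto simp: MInv_def)
  have mn: "m < n" using to_inner by (simp add: most_violated_def)
  obtain i where i: "i < n" "a i \<bullet> (x /\<^sub>R norm x) < 0" using to_inner(3) by (auto simp: feasible_def not_le)
  have "a m \<bullet> (x /\<^sub>R norm x) < 0" using to_inner(4) i by (auto simp: most_violated_def)
  moreover have "norm x > 0" using x0 by simp
  ultimately have amx: "a m \<bullet> x < 0" by (simp add: mult_less_0_iff)
  have notaff: "a m \<notin> affine hull Q"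
  proof
    assume "a m \<in> affine hull Q"
    then have "a m \<bullet> x = x \<bullet> x" using ctr_aff[OF cQ] by blast
    with amx show False by (metis inner_ge_zero not_le)
  qed
  then have notQ: "a m \<notin> Q" using hull_subset[of Q affine] by blast
  have ind: "\<not> affine_dependent (insert (a m) Q)" using affine_independent_insert[OF iQ notaff] .
  have n0: "0 \<notin> convex hull (insert (a m) Q)" using to_inner(5) ind fQ by (simp add: positively_spanning_def)
  have yc: "x \<in> convex hull (insert (a m) Q)" using xc hull_mono[of Q "insert (a m) Q"] by blast
  have "Inv a n x t" unfolding to_inner Inv_def
    using M QA mn amx notQ ind n0 yc by auto
  moreover have "mu a n x t < mu a n x0 s"
    using card_le_n[OF QA] unfolding to_inner mu_def xx by simp
  ultimately show ?thesis by blast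
next
  case (accept am Q C y)
  from I obtain Q0 where M0: "MInv a n x0 Q0" and QQ0: "Q \<subseteq> Q0" and amA: "am \<in> a ` {..<n}"
    and amx: "am \<bullet> x0 < 0" and n0: "0 \<notin> convex hull (insert am Q0)"
    and yc: "y \<in> convex hull (insert am Q)" and yx: "y = x0 \<or> norm y < norm x0"
    unfolding accept Inv_def by auto
  have fQ0: "finite Q0" and Q0A: "Q0 \<subseteq> a ` {..<n}" using M0 by (auto simp: MInv_def)
  have SA: "insert am Q \<subseteq> a ` {..<n}" using QQ0 Q0A amA by auto
  have cC: "ctr (insert am Q) C"
    unfolding accept(4) by (rule tc) (use SA unitA[OF unit] in auto)
  have C0: "C \<noteq> 0"
  proof
    assume "C = 0"
    then have "0 \<in> convex hull (insert am Q0)"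
      using accept(5) hull_mono[of "insert am Q" "insert am Q0"] QQ0 by blast
    with n0 show False by simp
  qed
  have MC: "MInv a n C (insert am Q)"
    unfolding MInv_def using fQ0 QQ0 SA accept cC C0 finite_subset by auto
  have yaff: "y \<in> affine hull (insert am Q)" using yc convex_hull_subset_affine_hull by blast
  have "norm C < norm x0"
  proof (cases "y = x0")
    case True
    have "am \<bullet> C = C \<bullet> C" using cC by (simp add: ctr_def)
    then have "C \<noteq> x0" using amx by (metis inner_ge_zero not_le)
    then show ?thesis using ctr_lt[OF cC yaff] True by simp
  next
    case False
    then show ?thesis using yx ctr_le[OF cC yaff] by simp
  qed
  then have "lvl a n C < lvl a n x0" using lvl_less MInv_tc(2)[OF unit MC] by blast
  then have "(n + 2) * lvl a n C + (n + 2) \<le> (n + 2) * lvl a n x0"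
    by (metis Suc_leI add.commute mult_Suc_right mult_le_mono2)
  then have "mu a n C t < mu a n x0 s" unfolding accept mu_def by simp
  moreover have "Inv a n C t" unfolding accept Inv_def using MC accept(4) by simp
  ultimately show ?thesis by blast
next
  case (drop am Q C y' y F aj)
  obtain Q0 where M0: "MInv a n x0 Q0" and QQ0: "Q \<subseteq> Q0" and amA: "am \<in> a ` {..<n}"
    and amx: "am \<bullet> x0 < 0" and n0: "0 \<notin> convex hull (insert am Q0)"
    and ind0: "\<not> affine_dependent (insert am Q0)" and amQ0: "am \<notin> Q0"
    and yc: "y \<in> convex hull (insert am Q)" and yx: "y = x0 \<or> norm y < norm x0"
    using I unfolding drop(1) Inv_def by auto
  have fQ0: "finite Q0" and Q0A: "Q0 \<subseteq> a ` {..<n}" using M0 by (auto simp: MInv_def)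
  have SA: "insert am Q \<subseteq> a ` {..<n}" using QQ0 Q0A amA by auto
  have cC: "ctr (insert am Q) C"
    unfolding drop(4) by (rule tc) (use SA unitA[OF unit] in auto)
  have yaff: "y \<in> affine hull (insert am Q)" using yc convex_hull_subset_affine_hull by blast
  have "C \<noteq> y" using drop(5) yc by auto
  then have Cy: "norm C < norm y" using ctr_lt[OF cC yaff] by simp
  have y'n: "y' = y \<or> norm y' < norm y"
  proof -
    obtain u where u: "0 \<le> u" "u \<le> 1" "y' = (1 - u) *\<^sub>R y + u *\<^sub>R C"
      using drop(6) by (auto simp: in_segment)
    show ?thesis
    proof (cases "u = 0")
      case True then show ?thesis using u by simp
    next
      case False then show ?thesis using u norm_comb_lt[OF Cy] by simp
    qed
  qed
  have y'x: "y' = x0 \<or> norm y' < norm x0" using y'n yx by auto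
  have "F face_of convex hull (insert am Q)" using drop(9) by (simp add: facet_of_def)
  then obtain c where c: "c \<subseteq> insert am Q" "F = convex hull c"
    using face_of_convex_hull_affine_independent[OF drop(3)] by blast
  have "aj \<notin> c" using drop(12) c hull_subset[of c convex] by blast
  then have "c \<subseteq> insert am (Q - {aj})" using c by blast
  then have y'c: "y' \<in> convex hull (insert am (Q - {aj}))"
    using drop(10) c hull_mono by blast
  have "Inv a n x0 t" unfolding drop(2) Inv_def
    using M0 QQ0 amA amx amQ0 ind0 n0 y'c y'x by auto
  moreover have "card (Q - {aj}) < card Q"
    using drop(11) QQ0 fQ0 by (meson card_Diff1_less finite_subset)
  then have "mu a n x0 t < mu a n x0 s" unfolding drop(1,2) mu_def by simp
  ultimately show ?thesis by blast
qed


lemma progress_main: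
  assumes unit: "\<forall>i<n. norm (a i) = 1" and n0: "0 < n"
  shows "\<exists>t. alg_step a n (Main x Q) t"
proof (cases "feasible a n (x /\<^sub>R norm x)")
  case True
  then show ?thesis using alg_step.stop_feasible by blast
next
  case False
  let ?p = "x /\<^sub>R norm x"
  let ?V = "(\<lambda>j. a j \<bullet> ?p) ` {..<n}"
  have fV: "finite ?V" and neV: "?V \<noteq> {}" using n0 by auto
  obtain m where m: "m < n" "a m \<bullet> ?p = Min ?V" using Min_in[OF fV neV] by auto
  have "a m \<bullet> ?p \<le> a i \<bullet> ?p" if "i < n" for i
    unfolding m(2) by (rule Min_le[OF fV]) (use that in auto)
  then have "most_violated a n ?p m" unfolding most_violated_def using m(1) by blast
  then show ?thesis
    using False alg_step.stop_spanning[of a n x m Q] alg_step.to_inner[of a n x m Q] by blast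
qed


lemma small_eps:
  fixes S :: "'a::euclidean_space set"
  assumes fS: "finite S" and b0: "\<forall>v\<in>S. 0 \<le> \<beta> v" and bs: "sum \<beta> S = 1"
    and by': "(\<Sum>v\<in>S. \<beta> v *\<^sub>R v) = y'"
    and gs: "sum \<gamma> S = 1" and gC: "(\<Sum>v\<in>S. \<gamma> v *\<^sub>R v) = C"
    and pos: "\<forall>v\<in>S. 0 < \<beta> v \<or> 0 \<le> \<gamma> v" and ne: "y' \<noteq> C"
  shows "\<exists>p. p \<in> open_segment y' C \<and> p \<in> convex hull S"
proof -
  have ev1: "\<forall>v\<in>S. eventually (\<lambda>e. 0 \<le> (1 - e) * \<beta> v + e * \<gamma> v) (at_right (0::real))"
  proof
    fix v assume v: "v \<in> S"
    show "eventually (\<lambda>e. 0 \<le> (1 - e) * \<beta> v + e * \<gamma> v) (at_right (0::real))"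
    proof (cases "0 < \<beta> v")
      case True
      have "((\<lambda>e. (1 - e) * \<beta> v + e * \<gamma> v) \<longlongrightarrow> (1 - 0) * \<beta> v + 0 * \<gamma> v) (at_right (0::real))"
        by (intro tendsto_intros)
      then have "eventually (\<lambda>e. 0 < (1 - e) * \<beta> v + e * \<gamma> v) (at_right (0::real))"
        using True by (intro order_tendstoD(1)) auto
      then show ?thesis by (rule eventually_mono) simp
    next
      case False
      then have "\<beta> v = 0" "0 \<le> \<gamma> v" using b0 pos v by force+
      have "eventually (\<lambda>e. 0 < e) (at_right (0::real))" by (rule eventually_at_right_less)
      then show ?thesis by (rule eventually_mono) (use \<open>\<beta> v = 0\<close> \<open>0 \<le> \<gamma> v\<close> in simp)
    qed
  qed
  have "eventually (\<lambda>e. \<forall>v\<in>S. 0 \<le> (1 - e) * \<beta> v + e * \<gamma> v) (at_right (0::real))"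
    using eventually_ball_finite[OF fS ev1] .
  moreover have "eventually (\<lambda>e. e \<in> {0<..<1}) (at_right (0::real))"
    by (rule eventually_at_right_real) simp
  ultimately have "eventually (\<lambda>e. (\<forall>v\<in>S. 0 \<le> (1 - e) * \<beta> v + e * \<gamma> v) \<and> e \<in> {0<..<1}) (at_right (0::real))"
    by (rule eventually_conj)
  then have "\<exists>e. (\<forall>v\<in>S. 0 \<le> (1 - e) * \<beta> v + e * \<gamma> v) \<and> e \<in> {0<..<1}"
    by (rule eventually_happens'[rotated]) simp
  then obtain e where e: "\<forall>v\<in>S. 0 \<le> (1 - e) * \<beta> v + e * \<gamma> v" "0 < e" "e < 1"
    by auto
  let ?p = "(1 - e) *\<^sub>R y' + e *\<^sub>R C"
  have "?p \<in> open_segment y' C" unfolding in_segment(2) using e(2,3) ne by blast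
  moreover have "?p \<in> convex hull S"
  proof -
    have s1: "sum (\<lambda>v. (1 - e) * \<beta> v + e * \<gamma> v) S = 1"
      using bs gs by (simp add: sum.distrib sum_distrib_left[symmetric])
    have s2: "(\<Sum>v\<in>S. ((1 - e) * \<beta> v + e * \<gamma> v) *\<^sub>R v) = ?p"
      unfolding by'[symmetric] gC[symmetric]
      by (simp add: scaleR_add_left sum.distrib scaleR_sum_right)
    have "\<exists>u. (\<forall>x\<in>S. 0 \<le> u x) \<and> sum u S = 1 \<and> (\<Sum>x\<in>S. u x *\<^sub>R x) = ?p"
      by (rule exI[of _ "\<lambda>v. (1 - e) * \<beta> v + e * \<gamma> v"]) (use e(1) s1 s2 in blast)
    then show ?thesis unfolding convex_hull_finite[OF fS] by (rule CollectI)
  qed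
  ultimately show ?thesis by blast
qed

lemma progress_inner:
  assumes unit: "\<forall>i<n. norm (a i) = 1" and I: "Inv a n x0 (Inner Q am y)"
  shows "\<exists>t. alg_step a n (Inner Q am y) t"
proof -
  obtain Q0 where M0: "MInv a n x0 Q0" and QQ0: "Q \<subseteq> Q0" and amA: "am \<in> a ` {..<n}"
    and amx: "am \<bullet> x0 < 0" and n0: "0 \<notin> convex hull (insert am Q0)"
    and ind0: "\<not> affine_dependent (insert am Q0)" and amQ0: "am \<notin> Q0"
    and yc: "y \<in> convex hull (insert am Q)" and yx: "y = x0 \<or> norm y < norm x0"
    using I unfolding Inv_def by auto
  let ?S = "insert am Q"
  have fQ0: "finite Q0" and Q0A: "Q0 \<subseteq> a ` {..<n}" and cQ0: "ctr Q0 x0"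
    using M0 by (auto simp: MInv_def)
  have fQ: "finite Q" using fQ0 QQ0 finite_subset by blast
  have fS: "finite ?S" using fQ by simp
  have amQ: "am \<notin> Q" using amQ0 QQ0 by blast
  have SA: "?S \<subseteq> a ` {..<n}" using QQ0 Q0A amA by auto
  have ind: "\<not> affine_dependent ?S"
    by (rule affine_independent_subset[OF ind0]) (use QQ0 in auto)
  define C where "C = touching_center ?S"
  have cC: "ctr ?S C"
    unfolding C_def by (rule tc) (use SA unitA[OF unit] in auto)
  show ?thesis
  proof (cases "C \<in> convex hull ?S")
    case True
    then show ?thesis using alg_step.accept[OF ind C_def] by blast
  next
    case Cn: False
    have yaff: "y \<in> affine hull ?S" using yc convex_hull_subset_affine_hull by blast
    have "C \<noteq> y" using Cn yc by auto
    then have Cy: "norm C < norm y" using ctr_lt[OF cC yaff] by simp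
    define g where "g t = y + t *\<^sub>R (C - y)" for t :: real
    define T where "T = {t. 0 \<le> t \<and> t \<le> 1 \<and> g t \<in> convex hull ?S}"
    have g01: "g t = (1 - t) *\<^sub>R y + t *\<^sub>R C" for t unfolding g_def by (simp add: algebra_simps)
    have cch: "closed (convex hull ?S)"
      using fS by (simp add: compact_imp_closed compact_convex_hull finite_imp_compact)
    have "closed (g -` (convex hull ?S))"
      by (rule continuous_closed_vimage[OF cch]) (unfold g_def, intro continuous_intros)
    then have clT: "closed T"
      unfolding T_def using closed_Int[OF closed_real_atLeastAtMost[of 0 1]] 
      by (simp add: Collect_conj_eq vimage_def atLeastAtMost_def atLeast_def atMost_def Int_assoc)
    have T0: "0 \<in> T" unfolding T_def g_def using yc by simp
    have bT: "bdd_above T" unfolding T_def by (rule bdd_aboveI[of _ 1]) auto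
    define ts where "ts = Sup T"
    have tsT: "ts \<in> T" unfolding ts_def using closed_contains_Sup[OF _ bT clT] T0 by blast
    have ts01: "0 \<le> ts" "ts \<le> 1" and gts: "g ts \<in> convex hull ?S" using tsT by (auto simp: T_def)
    have ts1: "ts < 1"
    proof -
      have "ts \<noteq> 1" using gts Cn unfolding g_def by auto
      then show ?thesis using ts01 by simp
    qed
    define y' where "y' = g ts"
    have y'seg: "y' \<in> closed_segment y C" unfolding y'_def in_segment(1) g01 using ts01 by blast
    have y'C: "y' \<noteq> C" using gts Cn y'_def by auto
    have noint: "open_segment y' C \<inter> convex hull ?S = {}"
    proof (rule ccontr)
      assume "open_segment y' C \<inter> convex hull ?S \<noteq> {}"
      then obtain p where p: "p \<in> open_segment y' C" "p \<in> convex hull ?S" by blast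
      then obtain u where u: "0 < u" "u < 1" "p = (1 - u) *\<^sub>R y' + u *\<^sub>R C" by (auto simp: in_segment)
      define s where "s = ts + u * (1 - ts)"
      have h1: "0 \<le> u * (1 - ts)" using u ts1 by simp
      have h2: "u * (1 - ts) \<le> 1 - ts" using u ts1 by (intro mult_left_le_one_le) auto
      have h3: "0 < u * (1 - ts)" using u ts1 by simp
      have "p = g s" unfolding u(3) y'_def g_def s_def by (simp add: algebra_simps)
      moreover have "0 \<le> s" "s \<le> 1" unfolding s_def using h1 h2 ts01 by linarith+
      ultimately have "s \<in> T" using p(2) by (simp add: T_def)
      then have "s \<le> ts" unfolding ts_def using bT by (rule cSup_upper)
      moreover have "ts < s" unfolding s_def using h3 by linarith
      ultimately show False by simp
    qed
    have y'n: "y' = y \<or> norm y' < norm y"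
    proof (cases "ts = 0")
      case True then show ?thesis unfolding y'_def g_def by simp
    next
      case False then show ?thesis unfolding y'_def g01 using ts01 norm_comb_lt[OF Cy] by simp
    qed
    have claim: "\<exists>q\<in>Q. y' \<in> convex hull (?S - {q})"
    proof (rule ccontr)
      assume nc: "\<not> (\<exists>q\<in>Q. y' \<in> convex hull (?S - {q}))"
      have y'S: "y' \<in> convex hull ?S" using gts y'_def by simp
      obtain \<beta> where b: "\<forall>v\<in>?S. 0 \<le> \<beta> v" "sum \<beta> ?S = 1" "(\<Sum>v\<in>?S. \<beta> v *\<^sub>R v) = y'"
        using y'S unfolding convex_hull_finite[OF fS] by blast
      have Caff: "C \<in> affine hull ?S" using cC by (simp add: ctr_def)
      obtain \<gamma> where g: "sum \<gamma> ?S = 1" "(\<Sum>v\<in>?S. \<gamma> v *\<^sub>R v) = C"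
        using Caff unfolding affine_hull_finite[OF fS] by blast
      have zero_in: "y' \<in> convex hull (?S - {v})" if v: "v \<in> ?S" "\<beta> v = 0" for v
      proof -
        have e1: "sum \<beta> (?S - {v}) = 1" using b(2) v fS by (simp add: sum_diff1)
        have e2: "(\<Sum>w\<in>?S-{v}. \<beta> w *\<^sub>R w) = y'" using b(3) v fS by (simp add: sum_diff1)
        have e3: "\<forall>w\<in>?S-{v}. 0 \<le> \<beta> w" using b(1) by blast
        have "\<exists>u. (\<forall>x\<in>?S-{v}. 0 \<le> u x) \<and> sum u (?S-{v}) = 1 \<and> (\<Sum>x\<in>?S-{v}. u x *\<^sub>R x) = y'"
          by (rule exI[of _ \<beta>]) (use e1 e2 e3 in blast)
        then show ?thesis unfolding convex_hull_finite[OF finite_Diff[OF fS]] by (rule CollectI)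
      qed
      have posQ: "0 < \<beta> q" if "q \<in> Q" for q
      proof (rule ccontr)
        assume "\<not> 0 < \<beta> q"
        then have "\<beta> q = 0" using b(1) that by force
        then show False using zero_in[of q] that nc by blast
      qed
      have pos: "\<forall>v\<in>?S. 0 < \<beta> v \<or> 0 \<le> \<gamma> v"
      proof
        fix v assume v: "v \<in> ?S"
        show "0 < \<beta> v \<or> 0 \<le> \<gamma> v"
        proof (cases "v = am")
          case False
          then show ?thesis using v posQ by auto
        next
          case True
          show ?thesis
          proof (rule ccontr)
            assume "\<not> (0 < \<beta> v \<or> 0 \<le> \<gamma> v)"
            then have bam: "\<beta> am = 0" "\<gamma> am < 0" using b(1) True v by force+
            have SQ: "?S - {am} = Q" using amQ by simp
            have "y' \<in> convex hull Q" using zero_in[of am] bam SQ by simp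
            then have "y' \<in> affine hull Q0"
              using hull_mono[OF QQ0, of convex] convex_hull_subset_affine_hull by blast
            then have "norm x0 \<le> norm y'" using ctr_le[OF cQ0] by blast
            then have y'x0: "y' = x0" using y'n yx by auto
            have r0: "0 \<le> x0 \<bullet> x0" by simp
            have "C \<bullet> x0 = (\<Sum>v\<in>?S. \<gamma> v * (v \<bullet> x0))"
              unfolding g(2)[symmetric] by (simp add: inner_sum_left)
            also have "\<dots> = \<gamma> am * (am \<bullet> x0) + (\<Sum>v\<in>Q. \<gamma> v * (v \<bullet> x0))"
              using fQ amQ by simp
            also have "(\<Sum>v\<in>Q. \<gamma> v * (v \<bullet> x0)) = (\<Sum>v\<in>Q. \<gamma> v * (x0 \<bullet> x0))"
              using cQ0 QQ0 by (intro sum.cong) (auto simp: ctr_def)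
            also have "\<dots> = (sum \<gamma> Q) * (x0 \<bullet> x0)" by (simp add: sum_distrib_right)
            also have "sum \<gamma> Q = 1 - \<gamma> am" using g(1) fQ amQ by simp
            finally have Cx: "C \<bullet> x0 = \<gamma> am * (am \<bullet> x0) + (1 - \<gamma> am) * (x0 \<bullet> x0)" .
            have x0aff: "x0 \<in> affine hull ?S" using y'S y'x0 convex_hull_subset_affine_hull by blast
            have "x0 \<bullet> C = C \<bullet> C" using ctr_aff[OF cC x0aff] .
            moreover have "norm C \<le> norm x0" using ctr_le[OF cC x0aff] .
            then have "(norm C)^2 \<le> (norm x0)^2" by (simp add: power_mono)
            then have "C \<bullet> C \<le> x0 \<bullet> x0" by (simp add: power2_norm_eq_inner)
            ultimately have "\<gamma> am * (am \<bullet> x0) + (1 - \<gamma> am) * (x0 \<bullet> x0) \<le> x0 \<bullet> x0"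
              using Cx by (simp add: inner_commute)
            then have le: "\<gamma> am * (am \<bullet> x0 - x0 \<bullet> x0) \<le> 0" by (simp add: algebra_simps)
            have "0 < \<gamma> am * (am \<bullet> x0 - x0 \<bullet> x0)"
              using bam(2) amx r0 by (intro mult_neg_neg) linarith+
            with le show False by simp
          qed
        qed
      qed
      obtain p where "p \<in> open_segment y' C" "p \<in> convex hull ?S"
        using small_eps[OF fS b(1) b(2) b(3) g(1) g(2) pos y'C] by blast
      with noint show False by blast
    qed
    then obtain q where q: "q \<in> Q" "y' \<in> convex hull (?S - {q})" by blast
    define F where "F = convex hull (?S - {q})"
    have qS: "q \<in> ?S" using q by simp
    have facet: "F facet_of convex hull ?S"
      unfolding facet_of_convex_hull_affine_independent[OF ind] F_def using q qS by blast
    have qF: "q \<notin> F"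
    proof
      assume "q \<in> F"
      then have "q \<in> affine hull (?S - {q})" unfolding F_def using convex_hull_subset_affine_hull by blast
      then show False using ind qS unfolding affine_dependent_def by blast
    qed
    have "F \<noteq> convex hull ?S" using qF qS hull_subset[of ?S convex] by blast
    then have "F \<subseteq> rel_frontier (convex hull ?S)"
      using face_of_subset_rel_frontier facet facet_of_def by blast
    then have relf: "y' \<in> rel_frontier (convex hull ?S)" using q F_def by blast
    have "alg_step a n (Inner Q am y) (Inner (Q - {q}) am y')"
      by (rule alg_step.drop[OF ind C_def Cn y'seg relf noint facet _ q(1) qF]) (use q F_def in simp)
    then show ?thesis by blast
  qed
qed

lemma init_inv:
  assumes unit: "\<forall>i<n. norm (a i) = 1" and j: "j < n"
  shows "Inv a n (a j) (Main (a j) {a j})"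
proof -
  have "norm (a j) = 1" using unit j by simp
  then have "a j \<noteq> 0" by auto
  moreover have "ctr {a j} (a j)" unfolding ctr_def using hull_subset[of "{a j}" affine] by auto
  ultimately show ?thesis using j hull_subset[of "{a j}" convex]
    by (auto simp: Inv_def MInv_def)
qed

theorem lemma2p8:
  fixes a :: "nat \<Rightarrow> 'a::euclidean_space" and n :: nat
  assumes "\<forall>i<n. norm (a i) = 1"
  shows "\<not> (\<exists>f. alg_init a n (f 0) \<and> (\<forall>k. alg_step a n (f k) (f (Suc k))))
     \<and> (\<forall>s t. alg_init a n s \<longrightarrow> (alg_step a n)\<^sup>*\<^sup>* s t \<longrightarrow> \<not> (\<exists>u. alg_step a n t u) \<longrightarrow>
           (\<exists>p. t = StopFeasible p \<and> norm p = 1 \<and> (\<forall>i<n. a i \<bullet> p \<ge> 0))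
         \<or> (\<exists>P. t = StopSpanning P \<and> P \<subseteq> a ` {..<n} \<and> positively_spanning P))"
proof (intro conjI allI impI notI)
  fix f assume "\<exists>f. alg_init a n (f 0) \<and> (\<forall>k. alg_step a n (f k) (f (Suc k)))"
  then obtain f where f0: "alg_init a n (f 0)" and fs: "\<And>k. alg_step a n (f k) (f (Suc k))" by blast
  obtain j where j: "j < n" "f 0 = Main (a j) {a j}" using f0 by (auto simp: alg_init_def)
  have I0: "Inv a n (a j) (f 0)" using init_inv[OF assms j(1)] j(2) by simp
  have key: "\<exists>x. Inv a n x (f k) \<and> mu a n x (f k) + k \<le> mu a n (a j) (f 0)" for k
  proof (induction k)
    case 0 then show ?case using I0 by auto
  next
    case (Suc k)
    then obtain x where x: "Inv a n x (f k)" "mu a n x (f k) + k \<le> mu a n (a j) (f 0)" by blast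
    obtain x1 where "Inv a n x1 (f (Suc k))" "mu a n x1 (f (Suc k)) < mu a n x (f k)"
      using step_inv[OF assms x(1) fs] by blast
    then show ?case using x(2) by (intro exI[of _ x1]) auto
  qed
  from key[of "Suc (mu a n (a j) (f 0))"] show False by auto
next
  fix s t
  assume init: "alg_init a n s" and r: "(alg_step a n)\<^sup>*\<^sup>* s t" and nu: "\<not> (\<exists>u. alg_step a n t u)"
  obtain j where j: "j < n" "s = Main (a j) {a j}" using init by (auto simp: alg_init_def)
  have "\<exists>x. Inv a n x t"
    using r
  proof induction
    case base then show ?case using init_inv[OF assms j(1)] j(2) by auto
  next
    case (step t u)
    then show ?case using step_inv[OF assms] by blast
  qed
  then obtain x where I: "Inv a n x t" by blast
  show "(\<exists>p. t = StopFeasible p \<and> norm p = 1 \<and> (\<forall>i<n. a i \<bullet> p \<ge> 0))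
         \<or> (\<exists>P. t = StopSpanning P \<and> P \<subseteq> a ` {..<n} \<and> positively_spanning P)"
  proof (cases t)
    case (Main x Q)
    then show ?thesis using nu progress_main[OF assms, of x Q] j(1) by auto
  next
    case (Inner Q am y)
    then show ?thesis using nu progress_inner[OF assms, of x Q am y] I by auto
  next
    case (StopFeasible p)
    then show ?thesis using I by (simp add: Inv_def)
  next
    case (StopSpanning P)
    then show ?thesis using I by (simp add: Inv_def)
  qed
qed

end
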